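(* Let $T\ge1$ and $0<\eta\le\frac{1}{5\sqrt T}$, and suppose $d:=\max\{25\eta^2T^2,1\}$ is a positive integer. Define $f:\mathbb R^d\to\mathbb R$ by $$f(w)=\max\Big\{0,\ \max_{i\in[d]}\Big(\frac{1}{\sqrt d}-w[i]-\frac{\eta i}{4d}\Big)\Big\},$$ where $w[i]$ is the $i$-th coordinate of $w$. Consider unprojected GD $w_1=0$, $w_{t+1}=w_t-\eta\nabla f(w_t)$, $1\le t<T$. Then for every $t\in[T]$: (i) $w_t[i]\le\frac{1}{2\sqrt d}$ for all $i\in[d]$; (ii) there is an index $j_t\in[d]$ such that for all $k\ne j_t$, $\frac{1}{\sqrt d}-w_t[j_t]-\frac{\eta j_t}{4d}>\frac{1}{\sqrt d}-w_t[k]-\frac{\eta k}{4d}+\frac{\eta}{8d}$; (iii) $\frac{1}{\sqrt d}-w_t[j_t]-\frac{\eta j_t}{4d}>\frac{\eta}{8d}$. In particular $f$ is differentiable at each $w_t$ with $\nabla f(w_t)=-e_{j_t}$, so the iterates are well defined.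
   Context: $e_j$ denotes the $j$-th standard basis vector of $\mathbb R^d$. *)

theory Defs
  imports "HOL-Analysis.Analysis"
begin

text \<open>Vectors of R^d are rendered as \<open>real ^ 'n\<close> with \<open>CARD('n) = d\<close>;
  the coordinate labels 1..d are given by a bijection \<open>idx :: 'n \<Rightarrow> nat\<close>
  onto \<open>{1..d}\<close>, so that \<open>w $ k\<close> is the coordinate \<open>w[idx k]\<close>.\<close>

definition hard_f :: "real \<Rightarrow> nat \<Rightarrow> ('n::finite \<Rightarrow> nat) \<Rightarrow> real ^ 'n \<Rightarrow> real" where
  "hard_f \<eta> d idx w =
     max 0 (Max ((\<lambda>i. 1 / sqrt (real d) - w $ i - \<eta> * real (idx i) / (4 * real d)) ` UNIV))"

definition grad :: "('a::euclidean_space \<Rightarrow> real) \<Rightarrow> 'a \<Rightarrow> 'a" where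
  "grad f w = (THE g. (f has_derivative (\<lambda>h. g \<bullet> h)) (at w))"

text \<open>Unprojected gradient descent: \<open>gd f \<eta> n\<close> is the iterate w_{n+1}, so w_1 = 0.\<close>
fun gd :: "('a::euclidean_space \<Rightarrow> real) \<Rightarrow> real \<Rightarrow> nat \<Rightarrow> 'a" where
  "gd f \<eta> 0 = 0"
| "gd f \<eta> (Suc n) = gd f \<eta> n - \<eta> *\<^sub>R grad f (gd f \<eta> n)"

end

theory Submission
  imports Defs
begin


lemma deriv_local:
  fixes w :: "real^'n::finite" and c :: "'n \<Rightarrow> real" and a \<delta> :: real
  assumes \<delta>: "\<delta> > 0"
   and gap: "\<forall>k. k \<noteq> j \<longrightarrow> a - w$j - c j > a - w$k - c k + \<delta>"
   and pos: "a - w$j - c j > \<delta>"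
  shows "((\<lambda>x::real^'n. max 0 (Max ((\<lambda>i. a - x$i - c i) ` UNIV))) has_derivative (\<lambda>h. (- axis j 1) \<bullet> h)) (at w)"
proof -
  have eq: "a - x$j - c j = max 0 (Max ((\<lambda>i. a - x$i - c i) ` UNIV))" if "x \<in> ball w (\<delta>/2)" for x
  proof -
    have d: "\<bar>x$k - w$k\<bar> < \<delta>/2" for k
      using that component_le_norm_cart[of "x - w" k] by (auto simp: dist_norm norm_minus_commute)
    have "Max ((\<lambda>i. a - x$i - c i) ` UNIV) = a - x$j - c j"
    proof (rule Max_eqI)
      fix y assume "y \<in> (\<lambda>i. a - x$i - c i) ` UNIV"
      then obtain k where y: "y = a - x$k - c k" by auto
      show "y \<le> a - x$j - c j"
      proof (cases "k = j")
        case False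
        then show ?thesis using gap[rule_format, OF False] d[of k] d[of j] y unfolding abs_less_iff by linarith
      qed (simp add: y)
    qed auto
    moreover have "a - x$j - c j > 0" using pos d[of j] by linarith
    ultimately show ?thesis by simp
  qed
  have lin: "a - x$j - c j = (- axis j 1) \<bullet> x + (a - c j)" for x :: "real^'n"
    by (simp add: inner_axis')
  have "((\<lambda>x::real^'n. (- axis j 1) \<bullet> x + (a - c j)) has_derivative (\<lambda>h. (- axis j 1) \<bullet> h)) (at w)"
    by (auto intro!: derivative_eq_intros)
  then have "((\<lambda>x::real^'n. a - x$j - c j) has_derivative (\<lambda>h. (- axis j 1) \<bullet> h)) (at w)"
    by (simp only: lin)
  then show ?thesis
    by (rule has_derivative_transform_within_open[OF _ open_ball[of w "\<delta>/2"]])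
       (use \<delta> eq in auto)
qed

lemma grad_unique:
  fixes f :: "'a::euclidean_space \<Rightarrow> real"
  assumes "(f has_derivative (\<lambda>h. g \<bullet> h)) (at w)"
  shows "(THE g. (f has_derivative (\<lambda>h. g \<bullet> h)) (at w)) = g"
proof (rule the_equality)
  fix g' assume "(f has_derivative (\<lambda>h. g' \<bullet> h)) (at w)"
  from has_derivative_unique[OF this assms]
  have "\<And>h. g' \<bullet> h = g \<bullet> h" by metis
  from this[of "g' - g"] show "g' = g"
    by (metis inner_diff_left inner_diff_right eq_iff_diff_eq_0 inner_eq_zero_iff)
qed (rule assms)



theorem mainTheorem12:
  fixes T d :: nat and \<eta> :: real and idx :: "'n::finite \<Rightarrow> nat"
  assumes "T \<ge> 1"
    and "0 < \<eta>" and "\<eta> \<le> 1 / (5 * sqrt (real T))"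
    and "real d = max (25 * \<eta>^2 * (real T)^2) 1"
    and "CARD('n) = d"
    and "bij_betw idx UNIV {1..d}"
  shows "\<forall>t\<in>{1..T}.
     let w = gd (hard_f \<eta> d idx) \<eta> (t - 1) in
       (\<forall>i. w $ i \<le> 1 / (2 * sqrt (real d))) \<and>
       (\<exists>j. (\<forall>k. k \<noteq> j \<longrightarrow>
               1 / sqrt (real d) - w $ j - \<eta> * real (idx j) / (4 * real d)
               > 1 / sqrt (real d) - w $ k - \<eta> * real (idx k) / (4 * real d) + \<eta> / (8 * real d)) \<and>
            1 / sqrt (real d) - w $ j - \<eta> * real (idx j) / (4 * real d) > \<eta> / (8 * real d) \<and>
            (hard_f \<eta> d idx has_derivative (\<lambda>h. (- axis j 1) \<bullet> h)) (at w) \<and>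
            grad (hard_f \<eta> d idx) w = - axis j 1)"
proof -
  define s where "s = sqrt (real d)"
  define F where "F = hard_f \<eta> d idx"
  define W where "W n = (\<chi> i. \<eta> * (real (n div d) + (if idx i \<le> n mod d then 1 else 0)))" for n
  have d1: "real d \<ge> 1" using assms(4) by linarith
  then have dpos: "d > 0" by simp
  have s0: "s > 0" and ss: "s * s = real d" using d1 by (auto simp: s_def)
  have T1: "real T \<ge> 1" using assms(1) by simp
  have sT: "sqrt (real T) > 0" using T1 by simp
  have e5: "5 * \<eta> * sqrt (real T) \<le> 1"
    using assms(3) sT by (simp add: field_simps)
  have "(5 * \<eta> * sqrt (real T))^2 \<le> 1"
    using e5 assms(2) sT by (metis power_le_one zero_le_mult_iff less_eq_real_def mult_pos_pos zero_less_numeral)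
  then have e25: "25 * \<eta>^2 * real T \<le> 1"
    using T1 by (simp add: power_mult_distrib)
  have "25 * \<eta>^2 * (real T)^2 \<le> real T"
    using mult_right_mono[OF e25, of "real T"] T1 by (simp add: power2_eq_square algebra_simps)
  then have dT: "real d \<le> real T" using assms(4) T1 by linarith
  have es: "5 * \<eta> * s \<le> 1"
  proof -
    have "s \<le> sqrt (real T)" unfolding s_def using dT by simp
    then show ?thesis using e5 assms(2) by (smt (verit) mult_left_mono)
  qed
  have "(5 * \<eta> * real T)^2 \<le> s^2"
    using assms(4) ss by (simp add: power_mult_distrib power2_eq_square algebra_simps)
  then have eT: "5 * \<eta> * real T \<le> s"
    using s0 by (meson power2_le_imp_le less_imp_le)

  have idx_rng: "1 \<le> idx k \<and> idx k \<le> d" for k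
    using assms(6) by (auto simp: bij_betw_def)
  have P: "(\<forall>i. W n $ i \<le> 1 / (2 * s)) \<and>
       (\<forall>k. k \<noteq> j \<longrightarrow>
               1 / s - W n $ j - \<eta> * real (idx j) / (4 * real d)
               > 1 / s - W n $ k - \<eta> * real (idx k) / (4 * real d) + \<eta> / (8 * real d)) \<and>
       1 / s - W n $ j - \<eta> * real (idx j) / (4 * real d) > \<eta> / (8 * real d)"
    if nT: "n < T" and j: "idx j = n mod d + 1" for n j
  proof -
    define q where "q = n div d"
    define r where "r = n mod d"
    have qr: "q * d + r = n" unfolding q_def r_def by simp
    have rd: "r < d" unfolding r_def using dpos by simp
    have qr': "real q * real d + real r \<le> real T - 1"
    proof -
      have h: "q*d + r + 1 \<le> T" using qr nT by simp
      have "real (q*d + r + 1) \<le> real T" using h by (simp only: of_nat_le_iff)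
      then show ?thesis by simp
    qed
    have Wj: "W n $ j = \<eta> * real q" using j by (simp add: W_def q_def r_def)
    have Wk: "W n $ k = \<eta> * real q + (if idx k \<le> r then \<eta> else 0)" for k
      by (simp add: W_def q_def r_def algebra_simps)
    have Aqd: "\<eta> * real q * real d \<le> \<eta> * (real T - 1) - \<eta> * real r"
      using mult_left_mono[OF qr', of \<eta>] assms(2) by (simp add: algebra_simps)
    have Aqd': "\<eta> * real q * real d + \<eta> * real r + \<eta> \<le> \<eta> * real T"
      using Aqd by (simp add: algebra_simps)
    have er0: "\<eta> * real r \<ge> 0" using assms(2) by simp
    have X: "\<eta> * real q * real d < s / 5" using Aqd' eT er0 assms(2) by linarith
    have Xs: "\<eta> * real q * s * s = \<eta> * real q * real d" by (metis ss mult.assoc)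
    have Aqs: "\<eta> * real q * s < 1/5"
    proof -
      have "(\<eta> * real q * s) * s < (1/5) * s" using X Xs by linarith
      then show ?thesis using s0 by (simp only: mult_less_cancel_right)
    qed
    have i: "W n $ i \<le> 1 / (2 * s)" for i
    proof -
      have "W n $ i \<le> \<eta> * real q + \<eta>" using Wk[of i] assms(2) by simp
      moreover have "(\<eta> * real q + \<eta>) * (2 * s) \<le> 1" using Aqs es by (simp add: algebra_simps)
      moreover have "W n $ i * (2 * s) \<le> (\<eta> * real q + \<eta>) * (2 * s)"
        by (rule mult_right_mono) (use s0 calculation in auto)
      ultimately have "W n $ i * (2 * s) \<le> 1" by linarith
      then show ?thesis using s0 by (subst pos_le_divide_eq) auto
    qed
    have g: "1 / s - W n $ j - \<eta> * real (idx j) / (4 * real d)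
               > 1 / s - W n $ k - \<eta> * real (idx k) / (4 * real d) + \<eta> / (8 * real d)"
      if kj: "k \<noteq> j" for k
    proof -
      define num where "num = 2*(\<eta>*real(idx k)) - 2*(\<eta>*real(idx j)) - \<eta>"
      have E: "1/s - W n $ j - \<eta>*real(idx j)/(4*real d) - (1/s - W n $ k - \<eta>*real(idx k)/(4*real d) + \<eta>/(8*real d))
           = (W n $ k - W n $ j) + num/(8*real d)"
        using d1 unfolding num_def by (simp add: field_simps)
      have "(W n $ k - W n $ j) + num/(8*real d) > 0"
      proof (cases "idx k \<le> r")
        case True
        have "\<eta> * real (idx k) \<ge> \<eta>" using idx_rng[of k] assms(2) by simp
        moreover have "\<eta> * real (idx j) \<le> \<eta> * real d" using idx_rng[of j] assms(2) by simp
        moreover have "\<eta> * real d \<ge> \<eta>" using d1 assms(2) by simp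
        moreover have "(-\<eta>) * (8*real d) = -8*(\<eta> * real d)" by simp
        ultimately have "(-\<eta>) * (8*real d) < num" unfolding num_def using assms(2) by linarith
        then have "-\<eta> < num/(8*real d)" using d1 by (subst pos_less_divide_eq) auto
        then show ?thesis using Wj Wk[of k] True by simp
      next
        case False
        have "idx k \<noteq> idx j" using kj assms(6) by (auto simp: bij_betw_def inj_def)
        then have "idx k \<ge> idx j + 1" using False j r_def by simp
        then have "\<eta> * real (idx k) \<ge> \<eta> * real (idx j) + \<eta>" using assms(2)
          by (metis distrib_left mult.right_neutral mult_left_mono of_nat_1 of_nat_add of_nat_le_iff less_imp_le)
        then have "num > 0" unfolding num_def using assms(2) by linarith
        then have "num/(8*real d) > 0" using d1 by simp
        then show ?thesis using Wj Wk[of k] False by simp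
      qed
      then show ?thesis using E by linarith
    qed
    have iii: "1 / s - W n $ j - \<eta> * real (idx j) / (4 * real d) > \<eta> / (8 * real d)"
    proof -
      have ej: "\<eta> * real (idx j) = \<eta> * real r + \<eta>" using j r_def by (simp add: algebra_simps)
      have inv_s: "1/s = s/real d" using ss s0 dpos by (simp add: field_simps)
      define num where "num = 8 * s - 8*(\<eta>*real q*real d) - 2*(\<eta>*real r + \<eta>) - \<eta>"
      have E: "1 / s - W n $ j - \<eta> * real (idx j) / (4 * real d) - \<eta> / (8 * real d) = num/(8*real d)"
        unfolding inv_s Wj ej num_def using d1 by (simp add: field_simps)
      have "5 * \<eta> * real T = 5 * (\<eta> * real T)" by simp
      then have "num > 0" unfolding num_def using Aqd' eT er0 assms(2) s0 by (smt (verit))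
      then have "num/(8*real d) > 0" using d1 by simp
      then show ?thesis using E by linarith
    qed
    show ?thesis using i g iii by blast
  qed
  have Feq: "F = (\<lambda>x. max 0 (Max ((\<lambda>i. 1/s - x$i - (\<lambda>i. \<eta> * real (idx i) / (4 * real d)) i) ` UNIV)))"
    unfolding F_def s_def by (simp add: fun_eq_iff hard_f_def)
  have D: "(F has_derivative (\<lambda>h. (- axis j 1) \<bullet> h)) (at (W n)) \<and> grad F (W n) = - axis j 1"
    if nT: "n < T" and j: "idx j = n mod d + 1" for n j
  proof -
    have PP: "\<forall>k. k \<noteq> j \<longrightarrow>
               1 / s - W n $ j - \<eta> * real (idx j) / (4 * real d)
               > 1 / s - W n $ k - \<eta> * real (idx k) / (4 * real d) + \<eta> / (8 * real d)"
      "1 / s - W n $ j - \<eta> * real (idx j) / (4 * real d) > \<eta> / (8 * real d)"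
      using P[OF nT j] by auto
    have dd: "(F has_derivative (\<lambda>h. (- axis j 1) \<bullet> h)) (at (W n))"
      unfolding Feq
      by (rule deriv_local[where \<delta>="\<eta> / (8 * real d)"]) (use PP assms(2) d1 in auto)
    moreover have "grad F (W n) = - axis j 1"
      unfolding grad_def by (rule grad_unique[OF dd])
    ultimately show ?thesis by blast
  qed
  have jex: "\<exists>j. idx j = n mod d + 1" for n
  proof -
    have "n mod d + 1 \<in> {1..d}" using dpos by (simp add: Suc_le_eq)
    then show ?thesis using assms(6) unfolding bij_betw_def by (metis imageE)
  qed
  have inj: "idx i = idx j \<Longrightarrow> i = j" for i j
    using assms(6) by (auto simp: bij_betw_def inj_def)
  have G: "n < T \<Longrightarrow> gd F \<eta> n = W n" for n
  proof (induction n)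
    case 0
    show ?case using idx_rng by (simp add: W_def vec_eq_iff) (metis Suc_le_eq)
  next
    case (Suc n)
    then have nT: "n < T" by simp
    obtain j where j: "idx j = n mod d + 1" using jex by blast
    have "gd F \<eta> (Suc n) = W n - \<eta> *\<^sub>R (- axis j 1)"
      using Suc.IH[OF nT] D[OF nT j] by simp
    also have "\<dots> = W (Suc n)"
    proof (subst vec_eq_iff, intro allI)
      fix i
      have ij: "i = j \<longleftrightarrow> idx i = n mod d + 1" using inj[of i j] j by auto
      show "(W n - \<eta> *\<^sub>R (- axis j 1)) $ i = W (Suc n) $ i"
        using ij idx_rng[of i]
        by (auto simp: W_def axis_def div_Suc mod_Suc algebra_simps split: if_splits)
    qed
    finally show ?case .
  qed
  show ?thesis
  proof (intro ballI)
    fix t assume t: "t \<in> {1..T}"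
    define n where "n = t - 1"
    have nT: "n < T" using t unfolding n_def by auto
    obtain j where j: "idx j = n mod d + 1" using jex by blast
    show "let w = gd (hard_f \<eta> d idx) \<eta> (t - 1) in
       (\<forall>i. w $ i \<le> 1 / (2 * sqrt (real d))) \<and>
       (\<exists>j. (\<forall>k. k \<noteq> j \<longrightarrow>
               1 / sqrt (real d) - w $ j - \<eta> * real (idx j) / (4 * real d)
               > 1 / sqrt (real d) - w $ k - \<eta> * real (idx k) / (4 * real d) + \<eta> / (8 * real d)) \<and>
            1 / sqrt (real d) - w $ j - \<eta> * real (idx j) / (4 * real d) > \<eta> / (8 * real d) \<and>
            (hard_f \<eta> d idx has_derivative (\<lambda>h. (- axis j 1) \<bullet> h)) (at w) \<and>
            grad (hard_f \<eta> d idx) w = - axis j 1)"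
      unfolding Let_def F_def[symmetric] s_def[symmetric] n_def[symmetric] G[OF nT]
      using P[OF nT j] D[OF nT j] by blast
  qed
qed
end
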